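(* LexiPS is not lexi-efficient. Concretely, take $n=3$, $p=2$, $D_F=\{1_F,2_F,3_F\}$, $D_B=\{1_B,2_B,3_B\}$, and lexicographic preferences: agent 1: $F\rhd_1 B$, $1_F\rhd 2_F\rhd 3_F$, $1_B\rhd 2_B\rhd 3_B$; agent 2: $F\rhd_2 B$, $1_F\rhd 2_F\rhd 3_F$, $1_B\rhd 3_B\rhd 2_B$; agent 3: $B\rhd_3 F$, $1_F\rhd 2_F\rhd 3_F$, $2_B\rhd 3_B\rhd 1_B$. Then LexiPS gives agent 1 the allocation with share $0.25$ of each of $1_F1_B,1_F3_B,2_F1_B,2_F3_B$, and this allocation is lexicographically dominated w.r.t. $\succ_1$ by the allocation with share $0.5$ of $1_F1_B$ and $0.5$ of $2_F3_B$.
   Context: Setting: $N$ agents, types $D_i$ with $|D_i|=n$ pairwise disjoint, unit supply, bundles $\mathcal D=\prod_i D_i$, $x_i$ the type-$i$ component. Lexicographic preference: importance order $\rhd_j$ over types and orders $\rhd^i_j$ on each $D_i$; $x\succ_j y$ iff some type $i$ has $x_i\rhd^i_j y_i$ and $x_{i'}=y_{i'}$ for all $i'\rhd_j i$. Lexicographic dominance: allocation $p$ lexicographically dominates $q$ w.r.t. $\succ$ if there is a bundle $x$ with $p_x>q_x$ and $p_y\ge q_y$ for every $y\succ x$. An assignment $P$ is lexi-efficient if there is no assignment $Q$ such that $Q_j$ lexicographically dominates $P_j$ w.r.t. $\succ_j$ for every agent $j$. LexiPS: supplies start at $1$ and carry across phases; in phase $k=1,\dots,p$ (unit duration), each agent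 $j$ eats at rate $1$ her $\rhd^i_j$-favorite item with positive remaining supply among items of her $k$-th most important type $i$; with $s^i_{j,o}$ the amount eaten of $o\in D_i$, output $p_{j,x}=\prod_i s^i_{j,x_i}$. *)

theory Defs
  imports Complex_Main
begin

(* 
  Types are numbered 0,...,p-1; the items of type i are the pairs (i,a) with a < n,
  so the sets D_i are pairwise disjoint.  A bundle is a list x of length p, x!i being the
  index of its type-i item.  Agents are numbered 0,...,N-1.
  A lexicographic preference of agent j is given by
    imp j   : the list of all types, most important first (importance order),
    ord j i : the list of all item indices of type i, most preferred first.
*)

type_synonym item = "nat \<times> nat"
type_synonym bdl = "nat list"

definition bundles :: "nat \<Rightarrow> nat \<Rightarrow> bdl set" where
  "bundles n p = {x. length x = p \<and> (\<forall>i<p. x ! i < n)}"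

definition before :: "'a list \<Rightarrow> 'a \<Rightarrow> 'a \<Rightarrow> bool" where
  "before xs a b \<longleftrightarrow> (\<exists>k l. k < l \<and> l < length xs \<and> xs ! k = a \<and> xs ! l = b)"

definition lex_pref :: "nat \<Rightarrow> nat list \<Rightarrow> (nat \<Rightarrow> nat list) \<Rightarrow> bdl \<Rightarrow> bdl \<Rightarrow> bool" where
  "lex_pref p imp ord x y \<longleftrightarrow>
     (\<exists>i<p. before (ord i) (x ! i) (y ! i) \<and> (\<forall>i'<p. before imp i' i \<longrightarrow> x ! i' = y ! i'))"

definition lex_dominates ::
  "nat \<Rightarrow> nat \<Rightarrow> (bdl \<Rightarrow> bdl \<Rightarrow> bool) \<Rightarrow> (bdl \<Rightarrow> real) \<Rightarrow> (bdl \<Rightarrow> real) \<Rightarrow> bool" where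
  "lex_dominates n p succ P Q \<longleftrightarrow>
     (\<exists>x\<in>bundles n p. P x > Q x \<and> (\<forall>y\<in>bundles n p. succ y x \<longrightarrow> P y \<ge> Q y))"

definition is_assignment :: "nat \<Rightarrow> nat \<Rightarrow> nat \<Rightarrow> (nat \<Rightarrow> bdl \<Rightarrow> real) \<Rightarrow> bool" where
  "is_assignment N n p Q \<longleftrightarrow>
     (\<forall>j<N. (\<forall>x. Q j x \<ge> 0) \<and> (\<forall>x. x \<notin> bundles n p \<longrightarrow> Q j x = 0)
            \<and> (\<Sum>x\<in>bundles n p. Q j x) = 1)
   \<and> (\<forall>i<p. \<forall>a<n. (\<Sum>j<N. \<Sum>x\<in>{x\<in>bundles n p. x ! i = a}. Q j x) \<le> 1)"

definition lexi_efficient ::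
  "nat \<Rightarrow> nat \<Rightarrow> nat \<Rightarrow> (nat \<Rightarrow> nat list) \<Rightarrow> (nat \<Rightarrow> nat \<Rightarrow> nat list)
   \<Rightarrow> (nat \<Rightarrow> bdl \<Rightarrow> real) \<Rightarrow> bool" where
  "lexi_efficient N n p imp ord P \<longleftrightarrow>
     \<not> (\<exists>Q. is_assignment N n p Q \<and>
            (\<forall>j<N. lex_dominates n p (lex_pref p (imp j) (ord j)) (Q j) (P j)))"

(* LexiPS as an event-driven simulation of the eating process.
  In a phase, every agent eats (rate 1) her favourite item with positive remaining
  supply among the items of the type she currently eats; between two events the set of eaten
  items is constant, and the next event is the earliest exhaustion of an eaten item (or the end
  of the phase).  State: (remaining supplies, amounts eaten, remaining time of the phase).*)

definition eat_target :: "(item \<Rightarrow> real) \<Rightarrow> nat list \<Rightarrow> nat \<Rightarrow> item option" where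
  "eat_target s ordi i = map_option (\<lambda>a. (i, a)) (find (\<lambda>a. s (i, a) > 0) ordi)"

definition ps_step ::
  "nat \<Rightarrow> nat \<Rightarrow> (nat \<Rightarrow> nat list) \<Rightarrow> (nat \<Rightarrow> nat \<Rightarrow> nat list)
   \<Rightarrow> (item \<Rightarrow> real) \<times> (nat \<Rightarrow> item \<Rightarrow> real) \<times> real
   \<Rightarrow> (item \<Rightarrow> real) \<times> (nat \<Rightarrow> item \<Rightarrow> real) \<times> real" where
  "ps_step N k imp ord st = (case st of (s, e, \<tau>) \<Rightarrow>
     let tgt = (\<lambda>j. eat_target s (ord j (imp j ! k)) (imp j ! k));
         rate = (\<lambda>it. real (card {j. j < N \<and> tgt j = Some it}));
         eaten = {it. \<exists>j<N. tgt j = Some it};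
         \<delta> = Min (insert \<tau> ((\<lambda>it. s it / rate it) ` eaten))
     in (\<lambda>it. s it - rate it * \<delta>,
         \<lambda>j it. if j < N \<and> tgt j = Some it then e j it + \<delta> else e j it,
         \<tau> - \<delta>))"

(* Phase k (0-based) lasts one time unit; each non-final event exhausts an item, so n*p+1
  event steps suffice to finish the phase (further steps with no time left are idle).*)
fun lexips_run ::
  "nat \<Rightarrow> nat \<Rightarrow> nat \<Rightarrow> (nat \<Rightarrow> nat list) \<Rightarrow> (nat \<Rightarrow> nat \<Rightarrow> nat list) \<Rightarrow> nat
   \<Rightarrow> (item \<Rightarrow> real) \<times> (nat \<Rightarrow> item \<Rightarrow> real)" where
  "lexips_run N n p imp ord 0 = (\<lambda>_. 1, \<lambda>_ _. 0)"
| "lexips_run N n p imp ord (Suc k) =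
     (case lexips_run N n p imp ord k of (s, e) \<Rightarrow>
        (case (ps_step N k imp ord ^^ (n * p + 1)) (s, e, 1) of (s', e', _) \<Rightarrow> (s', e')))"

definition lexips ::
  "nat \<Rightarrow> nat \<Rightarrow> nat \<Rightarrow> (nat \<Rightarrow> nat list) \<Rightarrow> (nat \<Rightarrow> nat \<Rightarrow> nat list) \<Rightarrow> nat \<Rightarrow> bdl \<Rightarrow> real" where
  "lexips N n p imp ord j x =
     (if x \<in> bundles n p then (\<Prod>i<p. snd (lexips_run N n p imp ord p) j (i, x ! i)) else 0)"

(* The example: type F = 0, type B = 1; item a_F = (0, a-1), a_B = (1, a-1);
  agent 1,2,3 = 0,1,2.*)
definition ex_imp :: "nat \<Rightarrow> nat list" where
  "ex_imp j = (if j = 2 then [1, 0] else [0, 1])"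

definition ex_ord :: "nat \<Rightarrow> nat \<Rightarrow> nat list" where
  "ex_ord j i = (if i = 0 then [0, 1, 2]
                 else if j = 0 then [0, 1, 2]
                 else if j = 1 then [0, 2, 1]
                 else [1, 2, 0])"

end

theory Submission
  imports Defs
begin



lemma ps_step_eq:
  assumes tgt: "\<And>j. j < N \<Longrightarrow> eat_target s (ord j (imp j ! k)) (imp j ! k) = T j"
    and rate: "\<And>it. real (card {j. j < N \<and> T j = Some it}) = R it"
    and eaten: "{it. \<exists>j<N. T j = Some it} = E"
    and d: "Min (insert \<tau> ((\<lambda>it. s it / R it) ` E)) = d"
  shows "ps_step N k imp ord (s, e, \<tau>) =
     (\<lambda>it. s it - R it * d, \<lambda>j it. if j < N \<and> T j = Some it then e j it + d else e j it, \<tau> - d)"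
proof -
  have 1: "{j. j < N \<and> eat_target s (ord j (imp j ! k)) (imp j ! k) = Some it} = {j. j < N \<and> T j = Some it}" for it
    using tgt by auto
  have 2: "{it. \<exists>j<N. eat_target s (ord j (imp j ! k)) (imp j ! k) = Some it} = E"
    using tgt eaten by auto
  have 3: "(j < N \<and> eat_target s (ord j (imp j ! k)) (imp j ! k) = Some it) = (j < N \<and> T j = Some it)" for j it
    using tgt by auto
  show ?thesis unfolding ps_step_def Let_def apply (simp only: prod.case 3 rate eaten d)
    done
qed




lemma lt3: "(j::nat) < 3 \<Longrightarrow> j = 0 \<or> j = 1 \<or> j = 2" by auto

lemma card3: "card {j. j < (3::nat) \<and> P j} = (if P 0 then 1 else 0) + (if P 1 then 1 else 0) + (if P 2 then 1 else 0)"
proof -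
  have "{j. j < (3::nat) \<and> P j} = (if P 0 then {0} else {}) \<union> (if P 1 then {1} else {}) \<union> (if P 2 then {2} else {})"
    using lt3 by auto
  thus ?thesis by simp
qed

lemma eaten3: "{it. \<exists>j<(3::nat). T j = Some it} = {it. T 0 = Some it \<or> T 1 = Some it \<or> T 2 = Some it}"
  using lt3 by force

definition "T0 = (\<lambda>j::nat. if j = 2 then Some (1::nat,1::nat) else Some (0,0))"

lemma stepA: "ps_step 3 0 ex_imp ex_ord (\<lambda>_. 1, \<lambda>_ _. 0, 1) =
  (\<lambda>it. 1 - real (card {j. j < 3 \<and> T0 j = Some it}) * (1/2), \<lambda>j it. if j < 3 \<and> T0 j = Some it then 0 + 1/2 else 0, 1 - 1/2)"
  apply (rule ps_step_eq[where T=T0 and E="{(0,0),(1,1)}"])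
  subgoal for j using lt3[of j] by (auto simp: eat_target_def ex_imp_def ex_ord_def T0_def)
    apply (rule refl)
  apply (auto simp: T0_def eaten3)[1]
  apply (simp add: card3 T0_def)
  done




lemma idle:
  assumes "\<forall>it. s it \<ge> 0"
  shows "ps_step N k imp ord (s, e, 0) = (s, e, 0)"
proof -
  define T where "T = (\<lambda>j. eat_target s (ord j (imp j ! k)) (imp j ! k))"
  define R where "R = (\<lambda>it. real (card {j. j < N \<and> T j = Some it}))"
  define E where "E = {it. \<exists>j<N. T j = Some it}"
  have fin: "finite E"
  proof -
    have "E \<subseteq> the ` T ` {..<N}" unfolding E_def by force
    thus ?thesis by (rule finite_subset) auto
  qed
  have m: "Min (insert 0 ((\<lambda>it. s it / R it) ` E)) = 0"
    using fin assms by (intro Min_eqI) (auto simp: R_def)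
  have "ps_step N k imp ord (s, e, 0) = (\<lambda>it. s it - R it * 0, \<lambda>j it. if j < N \<and> T j = Some it then e j it + 0 else e j it, 0 - 0)"
    by (rule ps_step_eq[OF _ _ _ m]) (auto simp: T_def R_def E_def)
  thus ?thesis by (simp add: fun_eq_iff)
qed

lemma idle_pow:
  assumes "ps_step N k imp ord (s, e, 0) = (s, e, 0)"
  shows "(ps_step N k imp ord ^^ m) (s, e, 0) = (s, e, 0)"
  by (induction m) (simp_all add: assms)

definition "S1 = (\<lambda>it::item. if it = (0,0) then 0 else if it = (1,1) then 1/2 else (1::real))"
definition "E1 = (\<lambda>j (it::item). if j < (2::nat) \<and> it = (0,0) then 1/2 else if j = 2 \<and> it = (1,1) then 1/2 else (0::real))"
definition "S2 = (\<lambda>it::item. if it \<in> {(0,0),(0,1),(1,1)} then 0 else (1::real))"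
definition "E2 = (\<lambda>j (it::item). if j < (2::nat) \<and> (it = (0,0) \<or> it = (0,1)) then 1/2 else if j = 2 \<and> it = (1,1) then 1 else (0::real))"
definition "S3 = (\<lambda>it::item. if it \<in> {(0,0),(0,1),(1,1),(1,0)} then 0 else if it = (0,2) then 1/2 else (1::real))"
definition "E3 = (\<lambda>j (it::item). if j < (2::nat) \<and> (it = (0,0) \<or> it = (0,1) \<or> it = (1,0)) then 1/2 else if j = 2 \<and> it = (1,1) then 1 else if j = 2 \<and> it = (0,2) then 1/2 else (0::real))"
definition "S4 = (\<lambda>it::item. if it \<in> {(0,0),(0,1),(1,1),(1,0),(0,2),(1,2)} then 0 else (1::real))"
definition "E4 = (\<lambda>j (it::item). if j < (2::nat) \<and> it \<in> {(0,0),(0,1),(1,0),(1,2)} then 1/2 else if j = 2 \<and> it \<in> {(1,1),(0,2)} then 1 else (0::real))"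

definition "R0 = (\<lambda>it::item. if it = (0,0) then 2 else if it = (1,1) then 1 else (0::real))"
definition "T1 = (\<lambda>j::nat. if j = 2 then Some (1::nat,1::nat) else Some (0,1))"
definition "R1 = (\<lambda>it::item. if it = (0,1) then 2 else if it = (1,1) then 1 else (0::real))"
definition "T2 = (\<lambda>j::nat. if j = 2 then Some (0::nat,2::nat) else Some (1,0))"
definition "R2 = (\<lambda>it::item. if it = (1,0) then 2 else if it = (0,2) then 1 else (0::real))"
definition "T3 = (\<lambda>j::nat. if j = 2 then Some (0::nat,2::nat) else Some (1,2))"
definition "R3 = (\<lambda>it::item. if it = (1,2) then 2 else if it = (0,2) then 1 else (0::real))"

lemma st1: "ps_step 3 0 ex_imp ex_ord (\<lambda>_. 1, \<lambda>_ _. 0, 1) = (S1, E1, 1/2)"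
  apply (rule trans[OF ps_step_eq[where T=T0 and E="{(0,0),(1,1)}" and R=R0 and d="1/2"]])
  subgoal for j using lt3[of j] by (auto simp: eat_target_def ex_imp_def ex_ord_def T0_def)
    apply (simp add: card3 T0_def R0_def)
   apply (auto simp: T0_def eaten3)[1]
  apply (simp add: R0_def)
  apply (auto simp: fun_eq_iff S1_def E1_def R0_def T0_def)
  done

lemma st2: "ps_step 3 0 ex_imp ex_ord (S1, E1, 1/2) = (S2, E2, 0)"
  apply (rule trans[OF ps_step_eq[where T=T1 and E="{(0,1),(1,1)}" and R=R1 and d="1/2"]])
  subgoal for j using lt3[of j] by (auto simp: eat_target_def ex_imp_def ex_ord_def T1_def S1_def)
    apply (simp add: card3 T1_def R1_def)
   apply (auto simp: T1_def eaten3)[1]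
  apply (simp add: R1_def S1_def)
  apply (auto simp: fun_eq_iff S1_def E1_def R1_def T1_def S2_def E2_def)
  done

lemma st3: "ps_step 3 (Suc 0) ex_imp ex_ord (S2, E2, 1) = (S3, E3, 1/2)"
  apply (rule trans[OF ps_step_eq[where T=T2 and E="{(1,0),(0,2)}" and R=R2 and d="1/2"]])
  subgoal for j using lt3[of j] by (auto simp: eat_target_def ex_imp_def ex_ord_def T2_def S2_def)
    apply (simp add: card3 T2_def R2_def)
   apply (auto simp: T2_def eaten3)[1]
  apply (simp add: R2_def S2_def)
  apply (auto simp: fun_eq_iff S2_def E2_def R2_def T2_def S3_def E3_def)
  done

lemma st4: "ps_step 3 (Suc 0) ex_imp ex_ord (S3, E3, 1/2) = (S4, E4, 0)"
  apply (rule trans[OF ps_step_eq[where T=T3 and E="{(1,2),(0,2)}" and R=R3 and d="1/2"]])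
  subgoal for j using lt3[of j] by (auto simp: eat_target_def ex_imp_def ex_ord_def T3_def S3_def)
    apply (simp add: card3 T3_def R3_def)
   apply (auto simp: T3_def eaten3)[1]
  apply (simp add: R3_def S3_def)
  apply (auto simp: fun_eq_iff S3_def E3_def R3_def T3_def S4_def E4_def)
  done

lemma pow7: "(f ^^ 7) x = (f ^^ 5) (f (f x))"
proof -
  have "(f ^^ 7) x = (f ^^ 5 \<circ> f ^^ 2) x" by (simp add: funpow_add[symmetric])
  thus ?thesis by (simp add: numeral_2_eq_2)
qed

lemma run2: "lexips_run 3 3 2 ex_imp ex_ord 2 = (S4, E4)"
proof -
  have i2: "(ps_step 3 0 ex_imp ex_ord ^^ m) (S2, E2, 0) = (S2, E2, 0)" for m
    by (rule idle_pow, rule idle) (simp add: S2_def)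
  have i4: "(ps_step 3 (Suc 0) ex_imp ex_ord ^^ m) (S4, E4, 0) = (S4, E4, 0)" for m
    by (rule idle_pow, rule idle) (simp add: S4_def)
  have r1: "lexips_run 3 3 2 ex_imp ex_ord 1 = (S2, E2)"
    using lexips_run.simps(2)[of 3 3 2 ex_imp ex_ord 0] by (simp add: pow7 st1 st2 i2)
  have "lexips_run 3 3 2 ex_imp ex_ord 2 = lexips_run 3 3 2 ex_imp ex_ord (Suc 1)" by (simp only: Suc_1)
  also have "\<dots> = (S4, E4)"
    unfolding lexips_run.simps(2)[of 3 3 2 ex_imp ex_ord 1] r1 by (simp add: pow7 st3 st4 i4)
  finally show ?thesis .
qed




lemma lexips_eq: "lexips 3 3 2 ex_imp ex_ord j x = (if x \<in> bundles 3 2 then E4 j (0, x!0) * E4 j (1, x!1) else 0)"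
  unfolding lexips_def run2 by (simp add: numeral_2_eq_2)

lemma bundles32: "bundles 3 2 = {[0,0],[0,1],[0,2],[1,0],[1,1],[1,2],[2,0],[2,1],[2,2]}"
proof (rule set_eqI)
  fix x :: "nat list"
  show "x \<in> bundles 3 2 \<longleftrightarrow> x \<in> {[0,0],[0,1],[0,2],[1,0],[1,1],[1,2],[2,0],[2,1],[2,2]}"
  proof
    assume "x \<in> bundles 3 2"
    then have l: "length x = 2" and a: "x!0 < 3" and b: "x!1 < 3" by (auto simp: bundles_def)
    from l have "x = [x!0, x!1]"
      by (cases x; cases "tl x"; auto)
    with lt3[OF a] lt3[OF b] show "x \<in> {[0,0],[0,1],[0,2],[1,0],[1,1],[1,2],[2,0],[2,1],[2,2]}"
      by (metis insertI1 insertI2 One_nat_def)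
  next
    assume "x \<in> {[0,0],[0,1],[0,2],[1,0],[1,1],[1,2],[2,0],[2,1],[2,2]}"
    then show "x \<in> bundles 3 2" by (auto simp: bundles_def less_2_cases_iff)
  qed
qed

lemma before3: "before [a,b,c] x y \<longleftrightarrow> (x = a \<and> (y = b \<or> y = c)) \<or> (x = b \<and> y = c)"
  unfolding before_def
proof
  assume "\<exists>k l. k < l \<and> l < length [a, b, c] \<and> [a, b, c] ! k = x \<and> [a, b, c] ! l = y"
  then obtain k l where "k < l" "l < 3" "[a, b, c] ! k = x" "[a, b, c] ! l = y" by auto
  then show "(x = a \<and> (y = b \<or> y = c)) \<or> (x = b \<and> y = c)"
    using lt3[of l] lt3[of k] by auto
next
  assume "(x = a \<and> (y = b \<or> y = c)) \<or> (x = b \<and> y = c)"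
  then show "\<exists>k l. k < l \<and> l < length [a, b, c] \<and> [a, b, c] ! k = x \<and> [a, b, c] ! l = y"
  proof (elim disjE conjE)
    assume "x = a" "y = b" thus ?thesis by (intro exI[of _ 0] exI[of _ 1]) auto
  next
    assume "x = a" "y = c" thus ?thesis by (intro exI[of _ 0] exI[of _ 2]) auto
  next
    assume "x = b" "y = c" thus ?thesis by (intro exI[of _ 1] exI[of _ 2]) auto
  qed
qed

lemma before2: "before [a,b] x y \<longleftrightarrow> x = a \<and> y = b"
  unfolding before_def
proof
  assume "\<exists>k l. k < l \<and> l < length [a, b] \<and> [a, b] ! k = x \<and> [a, b] ! l = y"
  then obtain k l where "k < l" "l < 2" "[a, b] ! k = x" "[a, b] ! l = y" by auto
  then show "x = a \<and> y = b" by (auto simp: less_2_cases_iff)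
next
  assume "x = a \<and> y = b" thus "\<exists>k l. k < l \<and> l < length [a, b] \<and> [a, b] ! k = x \<and> [a, b] ! l = y"
    by (intro exI[of _ 0] exI[of _ 1]) auto
qed

lemma ex2: "(\<exists>i<(2::nat). P i) \<longleftrightarrow> P 0 \<or> P 1" by (auto simp: less_2_cases_iff)
lemma all2: "(\<forall>i<(2::nat). P i) \<longleftrightarrow> P 0 \<and> P 1" by (auto simp: less_2_cases_iff)

lemma pref_eq: "lex_pref 2 imp ord x y \<longleftrightarrow>
   (before (ord 0) (x!0) (y!0) \<and> (before imp 1 0 \<longrightarrow> x!1 = y!1) \<and> (before imp 0 0 \<longrightarrow> x!0 = y!0)) \<or>
   (before (ord 1) (x!1) (y!1) \<and> (before imp 0 1 \<longrightarrow> x!0 = y!0) \<and> (before imp 1 1 \<longrightarrow> x!1 = y!1))"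
  unfolding lex_pref_def ex2 all2 by auto




lemma all3: "(\<forall>i<(3::nat). P i) \<longleftrightarrow> P 0 \<and> P 1 \<and> P 2" using lt3 by auto

definition "Qx = (\<lambda>j x. if j = (0::nat) then (if x = [0,0] \<or> x = [1,2] then 1/2 else 0)
   else if j = 1 then (if x = [0,0] \<or> x = [2,2] then 1/2 else 0)
   else (if x = [1,1] \<or> x = [2,1] then 1/2 else (0::real)))"

lemma part1: "lexips 3 3 2 ex_imp ex_ord 0 =
           (\<lambda>x. if x \<in> {[0, 0], [0, 2], [1, 0], [1, 2]} then 1 / 4 else 0)"
proof
  fix x
  show "lexips 3 3 2 ex_imp ex_ord 0 x = (if x \<in> {[0, 0], [0, 2], [1, 0], [1, 2]} then 1 / 4 else 0)"
    unfolding lexips_eq bundles32 by (auto simp: E4_def)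
qed

lemma part2: "lex_dominates 3 2 (lex_pref 2 (ex_imp 0) (ex_ord 0))
           (\<lambda>x. if x = [0, 0] \<or> x = [1, 2] then 1 / 2 else 0)
           (lexips 3 3 2 ex_imp ex_ord 0)"
  unfolding lex_dominates_def
  apply (rule bexI[of _ "[0,0]"])
   apply (simp add: bundles32 lexips_eq E4_def pref_eq ex_imp_def ex_ord_def before3 before2)
  apply (simp add: bundles32)
  done

lemma sum3: "(\<Sum>j<(3::nat). f j) = f 0 + f 1 + f 2 "
  by (simp add: numeral_3_eq_3 numeral_2_eq_2)

lemma finb: "finite (bundles 3 2)" by (simp add: bundles32)

lemma assign: "is_assignment 3 3 2 Qx"
  unfolding is_assignment_def all3 all2 sum.inter_filter[OF finb]
  by (simp add: bundles32 Qx_def sum3)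

lemma dom: "j < 3 \<Longrightarrow> lex_dominates 3 2 (lex_pref 2 (ex_imp j) (ex_ord j)) (Qx j) (lexips 3 3 2 ex_imp ex_ord j)"
  unfolding lex_dominates_def
  apply (drule lt3)
  apply (elim disjE)
    apply (rule bexI[of _ "[0,0]"])
     apply (simp add: bundles32 lexips_eq E4_def pref_eq ex_imp_def ex_ord_def before3 before2 Qx_def)
    apply (simp add: bundles32)
    apply (rule bexI[of _ "[0,0]"])
     apply (simp add: bundles32 lexips_eq E4_def pref_eq ex_imp_def ex_ord_def before3 before2 Qx_def)
   apply (simp add: bundles32)
    apply (rule bexI[of _ "[1,1]"])
     apply (simp add: bundles32 lexips_eq E4_def pref_eq ex_imp_def ex_ord_def before3 before2 Qx_def)
  apply (simp add: bundles32)
  done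

theorem mainTheorem6:
  shows "lexips 3 3 2 ex_imp ex_ord 0 =
           (\<lambda>x. if x \<in> {[0, 0], [0, 2], [1, 0], [1, 2]} then 1 / 4 else 0)
       \<and> lex_dominates 3 2 (lex_pref 2 (ex_imp 0) (ex_ord 0))
           (\<lambda>x. if x = [0, 0] \<or> x = [1, 2] then 1 / 2 else 0)
           (lexips 3 3 2 ex_imp ex_ord 0)
       \<and> \<not> lexi_efficient 3 3 2 ex_imp ex_ord (lexips 3 3 2 ex_imp ex_ord)"
  using part1 part2 assign dom unfolding lexi_efficient_def by blast


end
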